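(* Let $h=(I,E)$ be a hypergraph with $|I|=d$, and let $\chi_d(h)$ be the polynomial which agrees, for $m\in\mathbb{Z}_{>0}$, with the number of proper colorings of $h$ with $m$ colors. Then for every $m\in\mathbb{Z}_{>0}$, $$(-1)^d\chi_d(h)(-m)=\#\{(\varsigma,c):\ \varsigma\text{ an acyclic heading of }h,\ c:I\to[m]\text{ a coloring compatible with }\varsigma\}.$$ In particular, the number of acyclic headings of $h$ equals $(-1)^d\chi_d(h)(-1)$.
   Context: A hypergraph $h=(I,E)$ consists of a finite set $I$ of nodes and a finite multiset $E$ of nonempty subsets of $I$ (hyperedges). A coloring with $m$ colors is any map $c:I\to[m]=\{1,\dots,m\}$ (not necessarily proper); it is proper if every hyperedge $e$ contains exactly one node $i$ with $c(i)=\max_{j\in e}c(j)$. A heading is a map $\varsigma:E\to I$ with $\varsigma(e)\in e$ for every $e$. An oriented cycle in $\varsigma$ is a sequence of hyperedges $e_1,\dots,e_\ell$ with $\varsigma(e_j)\in e_{j+1}\setminus\{\varsigma(e_{j+1})\}$ for all $j$, indices modulo $\ell$; $\varsigma$ is acyclic if it has no oriented cycle. A coloring $c$ and a heading $\varsigma$ are compatible if $c(\varsigma(e))=\max_{j\in e}c(j)$ for every $e\in E$. *)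

theory Defs
  imports Main "HOL-Library.FuncSet" "HOL-Computational_Algebra.Polynomial"
begin

text \<open>A hypergraph is given by a finite node set I, a finite index set Ed of
  hyperedge occurrences (so that E is a multiset) and a map edge assigning to each
  index its hyperedge, a nonempty subset of I.\<close>

definition hypergraph :: "'a set \<Rightarrow> 'e set \<Rightarrow> ('e \<Rightarrow> 'a set) \<Rightarrow> bool" where
  "hypergraph I Ed edge \<longleftrightarrow> finite I \<and> finite Ed \<and>
     (\<forall>k\<in>Ed. edge k \<noteq> {} \<and> edge k \<subseteq> I)"

definition colorings :: "'a set \<Rightarrow> nat \<Rightarrow> ('a \<Rightarrow> nat) set" where
  "colorings I m = I \<rightarrow>\<^sub>E {1..m}"

definition proper :: "'e set \<Rightarrow> ('e \<Rightarrow> 'a set) \<Rightarrow> ('a \<Rightarrow> nat) \<Rightarrow> bool" where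
  "proper Ed edge c \<longleftrightarrow> (\<forall>k\<in>Ed. \<exists>!i. i \<in> edge k \<and> c i = Max (c ` edge k))"

definition proper_colorings :: "'a set \<Rightarrow> 'e set \<Rightarrow> ('e \<Rightarrow> 'a set) \<Rightarrow> nat \<Rightarrow> ('a \<Rightarrow> nat) set" where
  "proper_colorings I Ed edge m = {c \<in> colorings I m. proper Ed edge c}"

definition headings :: "'e set \<Rightarrow> ('e \<Rightarrow> 'a set) \<Rightarrow> ('e \<Rightarrow> 'a) set" where
  "headings Ed edge = Pi\<^sub>E Ed edge"

definition oriented_cycle :: "'e set \<Rightarrow> ('e \<Rightarrow> 'a set) \<Rightarrow> ('e \<Rightarrow> 'a) \<Rightarrow> nat \<Rightarrow> (nat \<Rightarrow> 'e) \<Rightarrow> bool" where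
  "oriented_cycle Ed edge s l f \<longleftrightarrow> l \<ge> 1 \<and> (\<forall>j<l. f j \<in> Ed) \<and>
     (\<forall>j<l. s (f j) \<in> edge (f (Suc j mod l)) - {s (f (Suc j mod l))})"

definition acyclic_heading :: "'e set \<Rightarrow> ('e \<Rightarrow> 'a set) \<Rightarrow> ('e \<Rightarrow> 'a) \<Rightarrow> bool" where
  "acyclic_heading Ed edge s \<longleftrightarrow> s \<in> headings Ed edge \<and> \<not> (\<exists>l f. oriented_cycle Ed edge s l f)"

definition acyclic_headings :: "'e set \<Rightarrow> ('e \<Rightarrow> 'a set) \<Rightarrow> ('e \<Rightarrow> 'a) set" where
  "acyclic_headings Ed edge = {s. acyclic_heading Ed edge s}"

definition compatible :: "'e set \<Rightarrow> ('e \<Rightarrow> 'a set) \<Rightarrow> ('a \<Rightarrow> nat) \<Rightarrow> ('e \<Rightarrow> 'a) \<Rightarrow> bool" where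
  "compatible Ed edge c s \<longleftrightarrow> (\<forall>k\<in>Ed. c (s k) = Max (c ` edge k))"

definition compatible_pairs :: "'a set \<Rightarrow> 'e set \<Rightarrow> ('e \<Rightarrow> 'a set) \<Rightarrow> nat \<Rightarrow> (('e \<Rightarrow> 'a) \<times> ('a \<Rightarrow> nat)) set" where
  "compatible_pairs I Ed edge m =
     {(s, c). s \<in> acyclic_headings Ed edge \<and> c \<in> colorings I m \<and> compatible Ed edge c s}"

end

theory Submission
  imports Defs
begin



lemma antidiff:
  fixes P :: "real poly"
  shows "\<exists>R. \<forall>x. poly R (x+1) - poly R x = poly P x"
proof (induction "degree P" arbitrary: P rule: less_induct)
  case less
  show ?case
  proof (cases "degree P = 0")
    case True
    then obtain c where P: "P = [:c:]" by (metis degree_eq_zeroE)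
    show ?thesis by (rule exI[of _ "[:0, c:]"]) (simp add: P algebra_simps)
  next
    case False
    define n where "n = degree P"
    define a where "a = lead_coeff P"
    define M where "M = monom (a / (real n + 1)) (Suc n)"
    define D where "D = (\<Sum>k\<le>n. monom (a / (real n + 1) * real (Suc n choose k)) k)"
    have polyD: "poly M (x+1) - poly M x = poly D x" for x
    proof -
      have "(x+1)^(Suc n) = (\<Sum>k\<le>Suc n. real (Suc n choose k) * x^k * 1^(Suc n - k))"
        by (rule binomial_ring)
      also have "\<dots> = (\<Sum>k\<le>n. real (Suc n choose k) * x^k) + x^Suc n"
        by simp
      finally have e0: "(x+1)^(Suc n) = (\<Sum>k\<le>n. real (Suc n choose k) * x^k) + x^Suc n" .
      have e: "(x+1)^(Suc n) - x^Suc n = (\<Sum>k\<le>n. real (Suc n choose k) * x^k)"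
        using e0 by linarith
      have "poly M (x+1) - poly M x = a / (real n + 1) * ((x+1)^(Suc n) - x^Suc n)"
        by (simp add: M_def poly_monom algebra_simps)
      also have "\<dots> = (\<Sum>k\<le>n. a / (real n + 1) * real (Suc n choose k) * x^k)"
        unfolding e by (simp add: sum_distrib_left mult.assoc)
      also have "\<dots> = poly D x"
        by (simp add: D_def poly_sum poly_monom)
      finally show ?thesis .
    qed
    have cD: "coeff D n = a"
    proof -
      have "coeff D n = (\<Sum>k\<le>n. if n = k then a / (real n + 1) * real (Suc n choose k) else 0)"
        by (simp add: D_def coeff_sum coeff_monom)
      also have "\<dots> = a / (real n + 1) * real (Suc n choose n)"
        by (simp add: sum.delta)
      also have "\<dots> = a" by (simp add: field_simps)
      finally show ?thesis .
    qed
    have dD: "degree D \<le> n"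
      unfolding D_def by (rule degree_sum_le) (auto intro: order.trans[OF degree_monom_le])
    have "degree (P - D) \<le> n - 1"
    proof (rule degree_le, intro allI impI)
      fix i assume "n - 1 < i"
      then have "n \<le> i" by simp
      show "coeff (P - D) i = 0"
      proof (cases "i = n")
        case True then show ?thesis using cD by (simp add: a_def n_def)
      next
        case False
        then have "n < i" using \<open>n \<le> i\<close> by simp
        then show ?thesis using dD by (simp add: coeff_eq_0 n_def)
      qed
    qed
    then have "degree (P - D) < degree P" using False n_def by simp
    then obtain R' where R': "\<forall>x. poly R' (x+1) - poly R' x = poly (P - D) x" using less by blast
    show ?thesis
      by (rule exI[of _ "R' + M"]) (use R' polyD in \<open>auto simp: algebra_simps\<close>)
  qed
qed

lemma poly_of_diff:
  fixes \<phi> :: "nat \<Rightarrow> real"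
  assumes "\<And>m. \<phi> (Suc m) - \<phi> m = poly P (real m)"
  shows "\<exists>Q. \<forall>m. poly Q (real m) = \<phi> m"
proof -
  obtain R where R: "\<forall>x. poly R (x+1) - poly R x = poly P x" using antidiff by blast
  define Q where "Q = R + [:\<phi> 0 - poly R 0:]"
  have "poly Q (real m) = \<phi> m" for m
  proof (induction m)
    case 0 then show ?case by (simp add: Q_def)
  next
    case (Suc m)
    have "poly Q (real (Suc m)) = poly Q (real m) + poly P (real m)"
      using R[rule_format, of "real m"] by (simp add: Q_def algebra_simps)
    then show ?case using Suc assms[of m] by simp
  qed
  then show ?thesis by blast
qed




locale hg =
  fixes I :: "'a set" and Ed :: "'e set" and edge :: "'e \<Rightarrow> 'a set"
  assumes hyp: "hypergraph I Ed edge"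
begin

lemma finI: "finite I" and finEd: "finite Ed"
  and edge_ne: "k \<in> Ed \<Longrightarrow> edge k \<noteq> {}" and edge_sub: "k \<in> Ed \<Longrightarrow> edge k \<subseteq> I"
  using hyp by (auto simp: hypergraph_def)

lemma fin_edge: "k \<in> Ed \<Longrightarrow> finite (edge k)"
  using edge_sub finI finite_subset by blast

definition EU :: "'a set \<Rightarrow> 'e set" where "EU U = {k\<in>Ed. edge k \<subseteq> U}"
definition f :: "'a set \<Rightarrow> nat \<Rightarrow> nat" where "f U m = card (proper_colorings U (EU U) edge m)"
definition pr where "pr U m = compatible_pairs U (EU U) edge m"
definition g :: "'a set \<Rightarrow> nat \<Rightarrow> nat" where "g U m = card (pr U m)"
definition Ind :: "'a set \<Rightarrow> 'a set set" where
  "Ind U = {S. S \<subseteq> U \<and> (\<forall>k\<in>EU U. \<forall>x\<in>S. \<forall>y\<in>S. x \<in> edge k \<longrightarrow> y \<in> edge k \<longrightarrow> x = y)}"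

lemma EU_diff: "S \<subseteq> U \<Longrightarrow> EU (U - S) = {k\<in>EU U. edge k \<inter> S = {}}"
  by (auto simp: EU_def)

lemma fin_Ind: "U \<subseteq> I \<Longrightarrow> finite (Ind U)"
  by (rule finite_subset[of _ "Pow U"]) (auto simp: Ind_def intro: finite_subset[OF _ finI])

lemma fin_colorings: "U \<subseteq> I \<Longrightarrow> finite (colorings U m)"
  unfolding colorings_def by (rule finite_PiE) (auto intro: finite_subset[OF _ finI])

lemma fin_pc: "U \<subseteq> I \<Longrightarrow> finite (proper_colorings U E' edge m)"
  unfolding proper_colorings_def using fin_colorings by auto

lemma proper_split:
  assumes U: "U \<subseteq> I" and c: "c \<in> colorings U (Suc m)" and S: "S = {i\<in>U. c i = Suc m}"
  shows "proper (EU U) edge c \<longleftrightarrow> S \<in> Ind U \<and> proper (EU (U-S)) edge (restrict c (U-S))"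
proof -
  have cr: "i \<in> U \<Longrightarrow> c i \<in> {1..Suc m}" for i using c by (auto simp: colorings_def)
  have key1: "(\<exists>!i. i\<in>edge k \<and> c i = Max (c`edge k)) \<longleftrightarrow> (\<forall>x\<in>S. \<forall>y\<in>S. x\<in>edge k \<longrightarrow> y\<in>edge k \<longrightarrow> x=y)"
    if k: "k \<in> EU U" and z: "z \<in> edge k \<inter> S" for k z
  proof -
    have kE: "k \<in> Ed" and ku: "edge k \<subseteq> U" using k by (auto simp: EU_def)
    have "Max (c`edge k) = Suc m"
    proof (rule Max_eqI)
      show "finite (c ` edge k)" using fin_edge[OF kE] by simp
      show "y \<le> Suc m" if "y \<in> c ` edge k" for y using that ku cr by fastforce
      have "c z = Suc m" using z S by auto
      then show "Suc m \<in> c ` edge k" using z by (metis IntD1 imageI)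
    qed
    then have eq: "(i\<in>edge k \<and> c i = Max (c`edge k)) \<longleftrightarrow> (i \<in> edge k \<and> i \<in> S)" for i using ku S by auto
    show ?thesis using z by (simp only: eq) blast
  qed
  have key2: "(\<exists>!i. i\<in>edge k \<and> c i = Max (c`edge k)) \<longleftrightarrow>
       (\<exists>!i. i\<in>edge k \<and> restrict c (U-S) i = Max (restrict c (U-S) ` edge k))"
    if k: "k \<in> EU (U-S)" for k
  proof -
    have ks: "edge k \<subseteq> U - S" using k by (auto simp: EU_def)
    then have "restrict c (U-S) ` edge k = c ` edge k" by auto
    moreover have "\<forall>i\<in>edge k. restrict c (U-S) i = c i" using ks by auto
    ultimately show ?thesis by (metis (no_types, lifting))
  qed
  have SU: "S \<subseteq> U" using S by auto
  show ?thesis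
  proof
    assume p: "proper (EU U) edge c"
    have "S \<in> Ind U"
      unfolding Ind_def
    proof (intro CollectI conjI ballI impI SU)
      fix k x y assume k: "k \<in> EU U" and x: "x \<in> S" and y: "y \<in> S" and xk: "x \<in> edge k" and yk: "y \<in> edge k"
      have "\<exists>!i. i\<in>edge k \<and> c i = Max (c`edge k)" using p k by (auto simp: proper_def)
      then show "x = y" using key1[OF k, of x] x y xk yk by auto
    qed
    moreover have "proper (EU (U-S)) edge (restrict c (U-S))"
      unfolding proper_def
    proof
      fix k assume k: "k \<in> EU (U-S)"
      then have "k \<in> EU U" using EU_diff[OF SU] by auto
      then have "\<exists>!i. i\<in>edge k \<and> c i = Max (c`edge k)" using p by (auto simp: proper_def)
      then show "\<exists>!i. i\<in>edge k \<and> restrict c (U-S) i = Max (restrict c (U-S) ` edge k)"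
        using key2[OF k] by blast
    qed
    ultimately show "S \<in> Ind U \<and> proper (EU (U-S)) edge (restrict c (U-S))" by blast
  next
    assume a: "S \<in> Ind U \<and> proper (EU (U-S)) edge (restrict c (U-S))"
    show "proper (EU U) edge c"
      unfolding proper_def
    proof
      fix k assume k: "k \<in> EU U"
      show "\<exists>!i. i\<in>edge k \<and> c i = Max (c`edge k)"
      proof (cases "edge k \<inter> S = {}")
        case True
        then have k': "k \<in> EU (U-S)" using EU_diff[OF SU] k by auto
        then show ?thesis using key2[OF k'] a by (auto simp: proper_def)
      next
        case False
        then obtain z where "z \<in> edge k \<inter> S" by blast
        then show ?thesis using key1[OF k] a k by (auto simp: Ind_def)
      qed
    qed
  qed
qed

lemma f_Suc:
  assumes U: "U \<subseteq> I"
  shows "f U (Suc m) = (\<Sum>S\<in>Ind U. f (U-S) m)"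
proof -
  define A where "A = proper_colorings U (EU U) edge (Suc m)"
  define B where "B = Sigma (Ind U) (\<lambda>S. proper_colorings (U-S) (EU (U-S)) edge m)"
  define \<phi> where "\<phi> c = ({i\<in>U. c i = Suc m}, restrict c (U - {i\<in>U. c i = Suc m}))" for c :: "'a \<Rightarrow> nat"
  define \<psi> where "\<psi> p = (\<lambda>i. if i \<in> fst p then Suc m else snd p i)" for p :: "'a set \<times> ('a \<Rightarrow> nat)"
  have psi_S: "{i\<in>U. \<psi> (S,c') i = Suc m} = S" if SU: "S \<subseteq> U" and c'r: "c' \<in> (U-S) \<rightarrow>\<^sub>E {1..m}" for S c'
  proof (intro set_eqI iffI)
    fix x assume "x \<in> S" then show "x \<in> {i\<in>U. \<psi> (S,c') i = Suc m}" using SU by (auto simp: \<psi>_def)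
  next
    fix x assume x: "x \<in> {i\<in>U. \<psi> (S,c') i = Suc m}"
    show "x \<in> S"
    proof (rule ccontr)
      assume nx: "x \<notin> S"
      then have "x \<in> U - S" using x by auto
      then have "c' x \<le> m" using PiE_mem[OF c'r] by fastforce
      moreover have "c' x = Suc m" using x nx by (auto simp: \<psi>_def)
      ultimately show False by simp
    qed
  qed
  have psi_r: "restrict (\<psi> (S,c')) (U-S) = c'" if c'r: "c' \<in> (U-S) \<rightarrow>\<^sub>E {1..m}" for S c'
  proof
    fix x show "restrict (\<psi> (S,c')) (U-S) x = c' x"
      using c'r by (cases "x \<in> U - S") (auto simp: \<psi>_def PiE_iff extensional_def)
  qed
  have "bij_betw \<phi> A B"
  proof (rule bij_betw_byWitness[where f'=\<psi>])
    show "\<forall>a\<in>A. \<psi> (\<phi> a) = a"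
    proof
      fix c assume "c \<in> A"
      then have "c \<in> U \<rightarrow>\<^sub>E {1..Suc m}" by (simp add: A_def proper_colorings_def colorings_def)
      then show "\<psi> (\<phi> c) = c" by (auto simp: \<psi>_def \<phi>_def fun_eq_iff PiE_def extensional_def)
    qed
    show "\<phi> ` A \<subseteq> B"
    proof
      fix p assume "p \<in> \<phi> ` A"
      then obtain c where cA: "c \<in> A" and p: "p = \<phi> c" by auto
      define S where "S = {i\<in>U. c i = Suc m}"
      have cc: "c \<in> colorings U (Suc m)" and pc: "proper (EU U) edge c"
        using cA by (auto simp: A_def proper_colorings_def)
      have 1: "S \<in> Ind U" and 2: "proper (EU (U-S)) edge (restrict c (U-S))"
        using proper_split[OF U cc S_def] pc by auto
      have 3: "restrict c (U-S) \<in> colorings (U-S) m"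
        using cc by (auto simp: colorings_def S_def PiE_iff le_Suc_eq)
      show "p \<in> B" using 1 2 3 by (simp add: p \<phi>_def B_def S_def[symmetric] proper_colorings_def)
    qed
    show "\<forall>b\<in>B. \<phi> (\<psi> b) = b"
    proof
      fix b assume "b \<in> B"
      then obtain S c' where b: "b = (S, c')" and S: "S \<in> Ind U" and c': "c' \<in> colorings (U-S) m"
        by (auto simp: B_def proper_colorings_def)
      have SU: "S \<subseteq> U" using S by (auto simp: Ind_def)
      have c'r: "c' \<in> (U-S) \<rightarrow>\<^sub>E {1..m}" using c' by (simp add: colorings_def)
      have e1: "{i\<in>U. \<psi> b i = Suc m} = S" using psi_S[OF SU c'r] b by simp
      have e2: "restrict (\<psi> b) (U-S) = c'" using psi_r[OF c'r] b by simp
      show "\<phi> (\<psi> b) = b" using e1 e2 by (simp add: \<phi>_def b)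
    qed
    show "\<psi> ` B \<subseteq> A"
    proof
      fix d assume "d \<in> \<psi> ` B"
      then obtain b where bB: "b \<in> B" and d: "d = \<psi> b" by auto
      then obtain S c' where b: "b = (S, c')" and S: "S \<in> Ind U" and c': "c' \<in> colorings (U-S) m"
        and pc': "proper (EU (U-S)) edge c'"
        by (auto simp: B_def proper_colorings_def)
      have SU: "S \<subseteq> U" using S by (auto simp: Ind_def)
      have c'r: "c' \<in> (U-S) \<rightarrow>\<^sub>E {1..m}" using c' by (simp add: colorings_def)
      have dc: "d \<in> colorings U (Suc m)"
        unfolding colorings_def d b PiE_iff
      proof (intro conjI ballI)
        fix i assume iU: "i \<in> U" show "\<psi> (S, c') i \<in> {1..Suc m}"
        proof (cases "i \<in> S")
          case False
          then have "c' i \<in> {1..m}" using PiE_mem[OF c'r] iU by blast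
          then show ?thesis using False by (auto simp: \<psi>_def)
        qed (auto simp: \<psi>_def)
      next
        show "\<psi> (S, c') \<in> extensional U"
          using c'r SU by (auto simp: \<psi>_def PiE_iff extensional_def)
      qed
      have e1: "S = {i\<in>U. d i = Suc m}" using psi_S[OF SU c'r] b d by simp
      have e2: "restrict d (U-S) = c'" using psi_r[OF c'r] b d by simp
      have "proper (EU U) edge d" using proper_split[OF U dc e1] S pc' e2 by simp
      then show "d \<in> A" using dc by (simp add: A_def proper_colorings_def)
    qed
  qed
  then have "card A = card B" by (rule bij_betw_same_card)
  also have "card B = (\<Sum>S\<in>Ind U. card (proper_colorings (U-S) (EU (U-S)) edge m))"
    unfolding B_def by (rule card_SigmaI) (use fin_Ind[OF U] U in \<open>auto intro!: fin_pc\<close>)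
  finally show ?thesis unfolding f_def A_def .
qed

end



lemma cycle_exists:
  assumes finW: "finite W" and neW: "W \<noteq> {}"
    and st: "\<forall>w\<in>W. \<exists>k\<in>E. w \<in> edge k \<and> s k \<noteq> w \<and> s k \<in> W"
  shows "\<exists>l fc. oriented_cycle E edge s l fc"
proof -
  define \<nu> where "\<nu> w = (SOME k. k\<in>E \<and> w \<in> edge k \<and> s k \<noteq> w \<and> s k \<in> W)" for w
  have \<nu>: "\<nu> w \<in> E \<and> w \<in> edge (\<nu> w) \<and> s (\<nu> w) \<noteq> w \<and> s (\<nu> w) \<in> W" if "w \<in> W" for w
    using st that unfolding \<nu>_def by (metis (mono_tags, lifting) someI_ex)
  obtain w0 where w0: "w0 \<in> W" using neW by blast
  define F where "F w = s (\<nu> w)" for w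
  define ws where "ws n = (F ^^ n) w0" for n
  have wsS: "ws (Suc n) = F (ws n)" for n by (simp add: ws_def)
  have wsW: "ws n \<in> W" for n
    by (induction n) (use w0 \<nu> in \<open>auto simp: ws_def F_def\<close>)
  have "\<not> inj_on ws {..card W}"
  proof
    assume "inj_on ws {..card W}"
    then have "card {..card W} \<le> card W"
      by (rule card_inj_on_le) (use wsW finW in auto)
    then show False by simp
  qed
  then obtain i j where ij: "i \<noteq> j" "ws i = ws j" unfolding inj_on_def by blast
  obtain i j where ij: "i < j" "ws i = ws j"
    using ij by (metis linorder_neqE_nat)
  define l where "l = j - i"
  define fc where "fc t = \<nu> (ws (i + t))" for t
  have "oriented_cycle E edge s l fc"
    unfolding oriented_cycle_def
  proof (intro conjI allI impI)
    show "1 \<le> l" using ij by (simp add: l_def)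
    fix t assume "t < l"
    show "fc t \<in> E" using \<nu>[OF wsW] by (simp add: fc_def)
    have e: "ws (i + Suc t mod l) = ws (Suc (i + t))"
    proof (cases "Suc t < l")
      case True then show ?thesis by simp
    next
      case False
      then have "Suc t = l" using \<open>t < l\<close> by simp
      then have "Suc (i + t) = j" using ij by (simp add: l_def)
      then show ?thesis using ij \<open>Suc t = l\<close> by simp
    qed
    have "s (fc t) = ws (Suc (i + t))" by (simp add: fc_def wsS F_def)
    then show "s (fc t) \<in> edge (fc (Suc t mod l)) - {s (fc (Suc t mod l))}"
      using \<nu>[OF wsW[of "Suc (i+t)"]] e by (simp add: fc_def) (metis)
  qed
  then show ?thesis by blast
qed

context hg
begin

definition tog :: "'a set \<Rightarrow> nat \<Rightarrow> 'a set \<Rightarrow> ('e \<Rightarrow> 'a) \<Rightarrow> ('a \<Rightarrow> nat) \<Rightarrow> 'a \<Rightarrow> bool" where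
  "tog U m S s c v \<longleftrightarrow> v \<in> S \<or> (v \<in> U \<and> v \<notin> S \<and> c v = Suc m \<and>
     (\<forall>k\<in>EU (U-S). v \<in> edge k \<longrightarrow> s k = v) \<and> (\<forall>k\<in>EU U. v \<in> edge k \<longrightarrow> edge k \<inter> S = {}))"

definition flip :: "'a set \<Rightarrow> nat \<Rightarrow> 'a set \<Rightarrow> ('e \<Rightarrow> 'a) \<Rightarrow> ('a \<Rightarrow> nat) \<Rightarrow> 'a \<Rightarrow> 'a set \<times> ('e \<Rightarrow> 'a) \<times> ('a \<Rightarrow> nat)" where
  "flip U m S s c v = (if v \<in> S then
      (S - {v}, (\<lambda>k. if k \<in> EU (U - (S - {v})) then (if v \<in> edge k then v else s k) else undefined), c(v := Suc m))
    else (insert v S, restrict s (EU (U - insert v S)), c(v := undefined)))"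

definition X :: "'a set \<Rightarrow> nat \<Rightarrow> ('a set \<times> ('e \<Rightarrow> 'a) \<times> ('a \<Rightarrow> nat)) set" where
  "X U m = Sigma (Ind U) (\<lambda>S. pr (U-S) (Suc m))"

lemma EU_mono: "A \<subseteq> B \<Longrightarrow> EU A \<subseteq> EU B" by (auto simp: EU_def)

lemma X_iff: "(S, s, c) \<in> X U m \<longleftrightarrow> S \<in> Ind U \<and> s \<in> acyclic_headings (EU (U-S)) edge \<and>
   c \<in> colorings (U-S) (Suc m) \<and> compatible (EU (U-S)) edge c s"
  by (simp add: X_def pr_def compatible_pairs_def)

lemma acyc_iff: "s \<in> acyclic_headings E edge \<longleftrightarrow> s \<in> Pi\<^sub>E E edge \<and> (\<forall>l fc. \<not> oriented_cycle E edge s l fc)"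
  by (simp add: acyclic_headings_def acyclic_heading_def headings_def)

lemma flip_out:
  assumes x: "(S, s, c) \<in> X U m" and v: "v \<in> S" and U: "U \<subseteq> I"
  defines "S' \<equiv> S - {v}"
    and "s' \<equiv> (\<lambda>k. if k \<in> EU (U - (S - {v})) then (if v \<in> edge k then v else s k) else undefined)"
    and "c' \<equiv> c(v := Suc m)"
  shows "flip U m S s c v = (S', s', c')" "(S', s', c') \<in> X U m" "v \<notin> S'" "tog U m S' s' c' v"
    "flip U m S' s' c' v = (S, s, c)" "\<And>u. u \<noteq> v \<Longrightarrow> tog U m S' s' c' u \<longleftrightarrow> tog U m S s c u"
    "card S' = card S - 1" "card S \<ge> 1"
proof -
  show "flip U m S s c v = (S', s', c')" using v by (simp add: flip_def S'_def s'_def c'_def)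
  have SI: "S \<in> Ind U" and sa: "s \<in> acyclic_headings (EU (U-S)) edge"
    and cc: "c \<in> colorings (U-S) (Suc m)" and cp: "compatible (EU (U-S)) edge c s"
    using x by (auto simp: X_iff)
  have SU: "S \<subseteq> U" using SI by (auto simp: Ind_def)
  have finU: "finite U" using U finI finite_subset by blast
  have sP: "s \<in> Pi\<^sub>E (EU (U-S)) edge" and noc: "\<And>l fc. \<not> oriented_cycle (EU (U-S)) edge s l fc"
    using sa by (auto simp: acyc_iff)
  have cP: "c \<in> (U-S) \<rightarrow>\<^sub>E {1..Suc m}" using cc by (simp add: colorings_def)
  have US': "U - S' = insert v (U - S)" using v SU by (auto simp: S'_def)
  have EUS: "k \<in> EU (U - S)" if "k \<in> EU (U - S')" "v \<notin> edge k" for k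
    using that by (auto simp: EU_def S'_def)
  have EUS2: "k \<in> EU (U - S')" if "k \<in> EU (U - S)" for k
    using that by (auto simp: EU_def S'_def)
  have vnot: "v \<notin> edge k" if "k \<in> EU (U - S)" for k using that v by (auto simp: EU_def)
  have s'_v: "s' k = v" if "k \<in> EU (U - S')" "v \<in> edge k" for k
    using that by (simp add: s'_def S'_def)
  have s'_o: "s' k = s k" if "k \<in> EU (U - S')" "v \<notin> edge k" for k
    using that by (simp add: s'_def S'_def)
  have c'P: "c' \<in> (U-S') \<rightarrow>\<^sub>E {1..Suc m}"
    unfolding US' PiE_iff
  proof (intro conjI ballI)
    fix i assume "i \<in> insert v (U - S)"
    then show "c' i \<in> {1..Suc m}" using PiE_mem[OF cP] by (cases "i = v") (auto simp: c'_def)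
  next
    show "c' \<in> extensional (insert v (U - S))"
      using cP by (auto simp: c'_def extensional_def PiE_iff)
  qed
  have s'P: "s' \<in> Pi\<^sub>E (EU (U-S')) edge"
    unfolding PiE_iff
  proof (intro conjI ballI)
    fix k assume k: "k \<in> EU (U - S')"
    show "s' k \<in> edge k"
    proof (cases "v \<in> edge k")
      case True then show ?thesis using s'_v[OF k] by simp
    next
      case False then show ?thesis using s'_o[OF k False] PiE_mem[OF sP EUS[OF k False]] by simp
    qed
  next
    show "s' \<in> extensional (EU (U - S'))" by (simp add: s'_def S'_def extensional_def)
  qed
  have cp': "compatible (EU (U-S')) edge c' s'"
    unfolding compatible_def
  proof
    fix k assume k: "k \<in> EU (U - S')"
    have kE: "k \<in> Ed" and ks: "edge k \<subseteq> U - S'" using k by (auto simp: EU_def)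
    show "c' (s' k) = Max (c' ` edge k)"
    proof (cases "v \<in> edge k")
      case True
      have "Max (c' ` edge k) = Suc m"
      proof (rule Max_eqI)
        show "finite (c' ` edge k)" using fin_edge[OF kE] by simp
        show "y \<le> Suc m" if "y \<in> c' ` edge k" for y
        proof -
          obtain i where i: "i \<in> edge k" "y = c' i" using \<open>y \<in> c' ` edge k\<close> by blast
          then have "c' i \<in> {1..Suc m}" using PiE_mem[OF c'P] ks by blast
          then show ?thesis using i by simp
        qed
        show "Suc m \<in> c' ` edge k" using True by (metis c'_def fun_upd_same imageI)
      qed
      then show ?thesis using s'_v[OF k True] by (simp add: c'_def)
    next
      case False
      have k2: "k \<in> EU (U - S)" using EUS[OF k False] .
      have "c' ` edge k = c ` edge k" using False by (auto simp: c'_def)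
      moreover have "s k \<in> edge k" using PiE_mem[OF sP k2] .
      then have "c' (s k) = c (s k)" using False by (auto simp: c'_def)
      ultimately show ?thesis using cp k2 s'_o[OF k False] by (simp add: compatible_def)
    qed
  qed
  have noc': "\<not> oriented_cycle (EU (U-S')) edge s' l fc" for l fc
  proof
    assume oc: "oriented_cycle (EU (U-S')) edge s' l fc"
    then have l1: "l \<ge> 1" and fE: "\<And>j. j < l \<Longrightarrow> fc j \<in> EU (U-S')"
      and st: "\<And>j. j < l \<Longrightarrow> s' (fc j) \<in> edge (fc (Suc j mod l)) - {s' (fc (Suc j mod l))}"
      by (auto simp: oriented_cycle_def)
    show False
    proof (cases "\<exists>j<l. v \<in> edge (fc j)")
      case True
      then obtain j where j: "j < l" "v \<in> edge (fc j)" by blast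
      define j' where "j' = Suc j mod l"
      have j': "j' < l" using l1 by (simp add: j'_def)
      have "s' (fc j) = v" using s'_v[OF fE[OF j(1)] j(2)] .
      then have "v \<in> edge (fc j')" "v \<noteq> s' (fc j')" using st[OF j(1)] by (auto simp: j'_def)
      then show False using s'_v[OF fE[OF j']] by simp
    next
      case False
      have "oriented_cycle (EU (U-S)) edge s l fc"
        unfolding oriented_cycle_def
      proof (intro conjI allI impI l1)
        fix j assume j: "j < l"
        show "fc j \<in> EU (U - S)" using EUS[OF fE[OF j]] False j by blast
        have j': "Suc j mod l < l" using l1 by simp
        have "s' (fc j) = s (fc j)" using s'_o[OF fE[OF j]] False j by blast
        moreover have "s' (fc (Suc j mod l)) = s (fc (Suc j mod l))"
          using s'_o[OF fE[OF j']] False j' by blast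
        ultimately show "s (fc j) \<in> edge (fc (Suc j mod l)) - {s (fc (Suc j mod l))}"
          using st[OF j] by simp
      qed
      then show False using noc by blast
    qed
  qed
  have S'I: "S' \<in> Ind U" using SI by (auto simp: Ind_def S'_def)
  show "(S', s', c') \<in> X U m"
    unfolding X_iff using S'I s'P noc' c'P cp' by (simp add: acyc_iff colorings_def)
  show "v \<notin> S'" by (simp add: S'_def)
  have vU: "v \<in> U" using v SU by blast
  have nomeet: "\<forall>k\<in>EU U. v \<in> edge k \<longrightarrow> edge k \<inter> S' = {}"
    using SI v by (auto simp: Ind_def S'_def)
  show "tog U m S' s' c' v"
    unfolding tog_def using vU nomeet s'_v by (auto simp: c'_def S'_def)
  have ins: "insert v S' = S" using v by (auto simp: S'_def)
  have r: "restrict s' (EU (U - S)) = s"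
  proof
    fix k show "restrict s' (EU (U - S)) k = s k"
    proof (cases "k \<in> EU (U - S)")
      case True then show ?thesis using s'_o[OF EUS2[OF True] vnot[OF True]] by simp
    next
      case False then show ?thesis using sP by (simp add: PiE_def extensional_def)
    qed
  qed
  have cv: "c v = undefined" using cP v by (auto simp: PiE_def extensional_def)
  have c'': "c'(v := undefined) = c" using cv by (auto simp: c'_def fun_eq_iff)
  show "flip U m S' s' c' v = (S, s, c)"
    using \<open>v \<notin> S'\<close> by (simp add: flip_def ins r c'')
  show "tog U m S' s' c' u \<longleftrightarrow> tog U m S s c u" if uv: "u \<noteq> v" for u
  proof (cases "u \<in> S")
    case True then show ?thesis using uv by (simp add: tog_def S'_def)
  next
    case uS: False
    have cu: "c' u = c u" using uv by (simp add: c'_def)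
    have uS': "u \<notin> S'" using uS by (simp add: S'_def)
    have "((\<forall>k\<in>EU (U-S'). u \<in> edge k \<longrightarrow> s' k = u) \<and> (\<forall>k\<in>EU U. u \<in> edge k \<longrightarrow> edge k \<inter> S' = {}))
      \<longleftrightarrow> ((\<forall>k\<in>EU (U-S). u \<in> edge k \<longrightarrow> s k = u) \<and> (\<forall>k\<in>EU U. u \<in> edge k \<longrightarrow> edge k \<inter> S = {}))"
      (is "?A' \<and> ?B' \<longleftrightarrow> ?A \<and> ?B")
    proof
      assume ab: "?A \<and> ?B"
      have B': ?B' using ab by (auto simp: S'_def)
      have A': ?A'
      proof (intro ballI impI)
        fix k assume k: "k \<in> EU (U - S')" and uk: "u \<in> edge k"
        have "k \<in> EU U" using k EU_mono[of "U - S'" U] by blast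
        then have "edge k \<inter> S = {}" using ab uk by blast
        then have vk: "v \<notin> edge k" using v by blast
        show "s' k = u" using s'_o[OF k vk] ab EUS[OF k vk] uk by blast
      qed
      show "?A' \<and> ?B'" using A' B' by blast
    next
      assume ab: "?A' \<and> ?B'"
      have B: ?B
      proof (intro ballI impI)
        fix k assume k: "k \<in> EU U" and uk: "u \<in> edge k"
        have d: "edge k \<inter> S' = {}" using ab k uk by blast
        have vk: "v \<notin> edge k"
        proof
          assume vk: "v \<in> edge k"
          have "k \<in> EU (U - S')" using k d by (auto simp: EU_def)
          then have "s' k = v" "s' k = u" using s'_v vk ab uk by blast+
          then show False using uv by simp
        qed
        show "edge k \<inter> S = {}" using d vk by (auto simp: S'_def)
      qed
      have A: ?A
      proof (intro ballI impI)
        fix k assume k: "k \<in> EU (U - S)" and uk: "u \<in> edge k"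
        show "s k = u" using s'_o[OF EUS2[OF k] vnot[OF k]] ab EUS2[OF k] uk by simp
      qed
      show "?A \<and> ?B" using A B by blast
    qed
    then show ?thesis unfolding tog_def cu using uS uS' by blast
  qed
  have finS: "finite S" using SU finU finite_subset by blast
  show "card S' = card S - 1" using v finS by (simp add: S'_def)
  show "card S \<ge> 1" using v finS by (metis One_nat_def Suc_leI card_gt_0_iff empty_iff)
qed

end


context hg
begin

lemma flip_in:
  assumes x: "(S, s, c) \<in> X U m" and v: "v \<notin> S" and t: "tog U m S s c v" and U: "U \<subseteq> I"
  defines "S' \<equiv> insert v S" and "s' \<equiv> restrict s (EU (U - insert v S))" and "c' \<equiv> c(v := undefined)"
  shows "flip U m S s c v = (S', s', c')" "(S', s', c') \<in> X U m" "v \<in> S'"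
    "flip U m S' s' c' v = (S, s, c)" "card S' = card S + 1"
proof -
  show "flip U m S s c v = (S', s', c')" using v by (simp add: flip_def S'_def s'_def c'_def)
  have SI: "S \<in> Ind U" and sa: "s \<in> acyclic_headings (EU (U-S)) edge"
    and cc: "c \<in> colorings (U-S) (Suc m)" and cp: "compatible (EU (U-S)) edge c s"
    using x by (auto simp: X_iff)
  have SU: "S \<subseteq> U" using SI by (auto simp: Ind_def)
  have finU: "finite U" using U finI finite_subset by blast
  have sP: "s \<in> Pi\<^sub>E (EU (U-S)) edge" and noc: "\<And>l fc. \<not> oriented_cycle (EU (U-S)) edge s l fc"
    using sa by (auto simp: acyc_iff)
  have cP: "c \<in> (U-S) \<rightarrow>\<^sub>E {1..Suc m}" using cc by (simp add: colorings_def)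
  have vU: "v \<in> U" and cv: "c v = Suc m" and sink: "\<forall>k\<in>EU (U-S). v \<in> edge k \<longrightarrow> s k = v"
    and nomeet: "\<forall>k\<in>EU U. v \<in> edge k \<longrightarrow> edge k \<inter> S = {}"
    using t v by (auto simp: tog_def)
  have sub: "EU (U - S') \<subseteq> EU (U - S)" by (rule EU_mono) (auto simp: S'_def)
  have vnot: "v \<notin> edge k" if "k \<in> EU (U - S')" for k using that by (auto simp: EU_def S'_def)
  have S'I: "S' \<in> Ind U"
    unfolding Ind_def
  proof (intro CollectI conjI ballI impI)
    show "S' \<subseteq> U" using SU vU by (auto simp: S'_def)
    fix k x y assume k: "k \<in> EU U" and x: "x \<in> S'" and y: "y \<in> S'" and xk: "x \<in> edge k" and yk: "y \<in> edge k"
    show "x = y"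
    proof (cases "x = v \<or> y = v")
      case True
      then show ?thesis using nomeet k x y xk yk by (auto simp: S'_def)
    next
      case False
      then have "x \<in> S" "y \<in> S" using x y by (auto simp: S'_def)
      then show ?thesis using SI k xk yk by (auto simp: Ind_def)
    qed
  qed
  have s'P: "s' \<in> Pi\<^sub>E (EU (U-S')) edge"
    using sP sub unfolding s'_def S'_def by (auto simp: PiE_iff)
  have noc': "\<not> oriented_cycle (EU (U-S')) edge s' l fc" for l fc
  proof
    assume oc: "oriented_cycle (EU (U-S')) edge s' l fc"
    have "oriented_cycle (EU (U-S)) edge s l fc"
      unfolding oriented_cycle_def
    proof (intro conjI allI impI)
      show "1 \<le> l" using oc by (simp add: oriented_cycle_def)
      fix j assume j: "j < l"
      have j': "Suc j mod l < l" using j by simp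
      have f1: "fc j \<in> EU (U-S')" and f2: "fc (Suc j mod l) \<in> EU (U-S')"
        using oc j j' by (auto simp: oriented_cycle_def)
      show "fc j \<in> EU (U - S)" using f1 sub by blast
      show "s (fc j) \<in> edge (fc (Suc j mod l)) - {s (fc (Suc j mod l))}"
        using oc j f1 f2 by (auto simp: oriented_cycle_def s'_def S'_def)
    qed
    then show False using noc by blast
  qed
  have c'P: "c' \<in> (U-S') \<rightarrow>\<^sub>E {1..Suc m}"
    using cP unfolding c'_def S'_def by (auto simp: PiE_iff extensional_def)
  have cp': "compatible (EU (U-S')) edge c' s'"
    unfolding compatible_def
  proof
    fix k assume k: "k \<in> EU (U - S')"
    have k2: "k \<in> EU (U - S)" using k sub by blast
    have "c' ` edge k = c ` edge k" using vnot[OF k] by (auto simp: c'_def)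
    moreover have "s k \<in> edge k" using PiE_mem[OF sP k2] .
    then have "c' (s k) = c (s k)" using vnot[OF k] by (auto simp: c'_def)
    moreover have "s' k = s k" using k by (simp add: s'_def S'_def)
    ultimately show "c' (s' k) = Max (c' ` edge k)" using cp k2 by (simp add: compatible_def)
  qed
  show "(S', s', c') \<in> X U m"
    unfolding X_iff using S'I s'P noc' c'P cp' by (simp add: acyc_iff colorings_def)
  show "v \<in> S'" by (simp add: S'_def)
  have e1: "S' - {v} = S" using v by (auto simp: S'_def)
  have e2: "(\<lambda>k. if k \<in> EU (U - (S' - {v})) then (if v \<in> edge k then v else s' k) else undefined) = s"
  proof
    fix k
    show "(if k \<in> EU (U - (S' - {v})) then (if v \<in> edge k then v else s' k) else undefined) = s k"
    proof (cases "k \<in> EU (U - S)")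
      case True
      show ?thesis
      proof (cases "v \<in> edge k")
        case True2: True
        then show ?thesis using sink True e1 by simp
      next
        case False
        then have "k \<in> EU (U - S')" using True by (auto simp: EU_def S'_def)
        then show ?thesis using True False e1 by (simp add: s'_def S'_def)
      qed
    next
      case False
      then show ?thesis using sP e1 by (simp add: PiE_def extensional_def)
    qed
  qed
  have e3: "c'(v := Suc m) = c" using cv by (auto simp: c'_def fun_eq_iff)
  show "flip U m S' s' c' v = (S, s, c)"
    using \<open>v \<in> S'\<close> e2 e3 by (simp add: flip_def e1)
  have finS: "finite S" using SU finU finite_subset by blast
  show "card S' = card S + 1" using v finS by (simp add: S'_def)
qed

lemma flip_out':
  assumes x: "(S, s, c) \<in> X U m" and v: "v \<in> S" and U: "U \<subseteq> I"
    and fe: "flip U m S s c v = (S', s', c')"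
  shows "(S', s', c') \<in> X U m" "v \<notin> S'" "tog U m S' s' c' v"
    "flip U m S' s' c' v = (S, s, c)" "\<And>u. u \<noteq> v \<Longrightarrow> tog U m S' s' c' u \<longleftrightarrow> tog U m S s c u"
    "card S' = card S - 1" "card S \<ge> 1"
proof -
  note fo = flip_out[OF x v U]
  have eqs: "S' = S - {v}" "s' = (\<lambda>k. if k \<in> EU (U - (S - {v})) then (if v \<in> edge k then v else s k) else undefined)"
    "c' = c(v := Suc m)" using fe fo(1) by auto
  show "(S', s', c') \<in> X U m" unfolding eqs by (rule fo(2))
  show "v \<notin> S'" unfolding eqs by (rule fo(3))
  show "tog U m S' s' c' v" unfolding eqs by (rule fo(4))
  show "flip U m S' s' c' v = (S, s, c)" unfolding eqs by (rule fo(5))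
  show "tog U m S' s' c' u \<longleftrightarrow> tog U m S s c u" if "u \<noteq> v" for u unfolding eqs by (rule fo(6)[OF that])
  show "card S' = card S - 1" unfolding eqs by (rule fo(7))
  show "card S \<ge> 1" by (rule fo(8))
qed

lemma flip_in':
  assumes x: "(S, s, c) \<in> X U m" and v: "v \<notin> S" and t: "tog U m S s c v" and U: "U \<subseteq> I"
    and fe: "flip U m S s c v = (S', s', c')"
  shows "(S', s', c') \<in> X U m" "v \<in> S'" "flip U m S' s' c' v = (S, s, c)" "card S' = card S + 1"
proof -
  note fi = flip_in[OF x v t U]
  have eqs: "S' = insert v S" "s' = restrict s (EU (U - insert v S))" "c' = c(v := undefined)"
    using fe fi(1) by auto
  show "(S', s', c') \<in> X U m" unfolding eqs by (rule fi(2))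
  show "v \<in> S'" unfolding eqs by (rule fi(3))
  show "flip U m S' s' c' v = (S, s, c)" unfolding eqs by (rule fi(4))
  show "card S' = card S + 1" unfolding eqs by (rule fi(5))
qed

definition togx where "togx U m x = tog U m (fst x) (fst (snd x)) (snd (snd x))"
definition iota where "iota U m x = flip U m (fst x) (fst (snd x)) (snd (snd x)) (SOME v. togx U m x v)"
definition wt :: "'a set \<times> ('e \<Rightarrow> 'a) \<times> ('a \<Rightarrow> nat) \<Rightarrow> real" where "wt x = (-1) ^ card (fst x)"

lemma iota_props:
  assumes x: "x \<in> X U m" and t: "\<exists>v. togx U m x v" and U: "U \<subseteq> I"
  shows "iota U m x \<in> X U m \<and> togx U m (iota U m x) = togx U m x \<and> iota U m (iota U m x) = x
     \<and> wt (iota U m x) = - wt x"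
proof -
  obtain S s c where xe: "x = (S, s, c)" by (cases x) auto
  define v where "v = (SOME v. togx U m x v)"
  have tv: "tog U m S s c v" using t someI_ex[OF t] by (simp add: v_def togx_def xe)
  have io: "iota U m x = flip U m S s c v" by (simp add: iota_def v_def xe)
  have x': "(S, s, c) \<in> X U m" using x xe by simp
  show ?thesis
  proof (cases "v \<in> S")
    case True
    obtain S' s' c' where fe: "flip U m S s c v = (S', s', c')" by (metis prod_cases3)
    note fo = flip_out'[OF x' True U fe]
    have tt: "togx U m (S', s', c') = togx U m x"
    proof
      fix u show "togx U m (S', s', c') u = togx U m x u"
      proof (cases "u = v")
        case True then show ?thesis using fo(3) tv by (simp add: togx_def xe)
      next
        case False then show ?thesis using fo(5)[OF False] by (simp add: togx_def xe)
      qed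
    qed
    have "iota U m (S', s', c') = flip U m S' s' c' v"
      by (simp add: iota_def tt v_def)
    then have ii: "iota U m (iota U m x) = x" using fo(4) fe io xe by simp
    have "wt (S', s', c') = - wt x"
    proof -
      have "card S = Suc (card S')" using fo(6,7) by simp
      then show ?thesis by (simp add: wt_def xe)
    qed
    then show ?thesis using fo(1) fe io tt ii by simp
  next
    case False
    obtain S' s' c' where fe: "flip U m S s c v = (S', s', c')" by (metis prod_cases3)
    note fi = flip_in'[OF x' False tv U fe]
    have xx2: "(S', s', c') \<in> X U m" using fi(1) .
    have vS2: "v \<in> S'" using fi(2) .
    have bk: "flip U m S' s' c' v = (S, s, c)" using fi(3) .
    note fo = flip_out'[OF xx2 vS2 U bk]
    have tt: "togx U m (S', s', c') = togx U m x"
    proof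
      fix u show "togx U m (S', s', c') u = togx U m x u"
      proof (cases "u = v")
        case True then show ?thesis using vS2 tv by (simp add: togx_def xe tog_def)
      next
        case False then show ?thesis using fo(5)[OF False] by (simp add: togx_def xe)
      qed
    qed
    have "iota U m (S', s', c') = flip U m S' s' c' v"
      by (simp add: iota_def tt v_def)
    then have ii: "iota U m (iota U m x) = x" using bk fe io xe by simp
    have "wt (S', s', c') = - wt x"
    proof -
      have "card S' = Suc (card S)" using fi(4) by simp
      then show ?thesis by (simp add: wt_def xe)
    qed
    then show ?thesis using xx2 fe io tt ii by simp
  qed
qed

end


context hg
begin

lemma fin_pr: "U \<subseteq> I \<Longrightarrow> finite (pr U m)"
proof -
  assume U: "U \<subseteq> I"
  have fE: "finite (EU U)" using finEd by (auto simp: EU_def)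
  have "finite (Pi\<^sub>E (EU U) edge \<times> colorings U m)"
    using fE fin_colorings[OF U] by (auto intro!: finite_PiE fin_edge simp: EU_def)
  moreover have "pr U m \<subseteq> Pi\<^sub>E (EU U) edge \<times> colorings U m"
    by (auto simp: pr_def compatible_pairs_def acyc_iff)
  ultimately show ?thesis using finite_subset by blast
qed

lemma g_rec:
  assumes U: "U \<subseteq> I"
  shows "real (g U m) = (\<Sum>S\<in>Ind U. (-1) ^ card S * real (g (U-S) (Suc m)))"
proof -
  have finU: "finite U" using U finI finite_subset by blast
  have finX: "finite (X U m)" unfolding X_def
    using fin_Ind[OF U] U by (auto intro!: finite_SigmaI fin_pr)
  have s1: "(\<Sum>x\<in>X U m. wt x) = (\<Sum>S\<in>Ind U. (-1) ^ card S * real (g (U-S) (Suc m)))"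
  proof -
    have "(\<Sum>x\<in>X U m. wt x) = (\<Sum>S\<in>Ind U. \<Sum>p\<in>pr (U-S) (Suc m). wt (S, p))"
      unfolding X_def by (subst sum.Sigma) (use fin_Ind[OF U] U in \<open>auto intro!: fin_pr simp: split_def\<close>)
    also have "\<dots> = (\<Sum>S\<in>Ind U. (-1) ^ card S * real (g (U-S) (Suc m)))"
      by (simp add: wt_def g_def mult.commute)
    finally show ?thesis .
  qed
  define N where "N = {x\<in>X U m. \<exists>v. togx U m x v}"
  have NX: "N \<subseteq> X U m" by (auto simp: N_def)
  have s2: "(\<Sum>x\<in>N. wt x) = 0"
  proof -
    have ip: "\<And>x. x \<in> N \<Longrightarrow> iota U m x \<in> N \<and> iota U m (iota U m x) = x \<and> wt (iota U m x) = - wt x"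
    proof -
      fix x assume "x \<in> N"
      then have x: "x \<in> X U m" and t: "\<exists>v. togx U m x v" by (auto simp: N_def)
      note p = iota_props[OF x t U]
      have "\<exists>v. togx U m (iota U m x) v" using p t by simp
      then show "iota U m x \<in> N \<and> iota U m (iota U m x) = x \<and> wt (iota U m x) = - wt x"
        using p by (simp add: N_def)
    qed
    have "(\<Sum>x\<in>N. - wt x) = (\<Sum>x\<in>N. wt x)"
      by (rule sum.reindex_bij_witness[where i="iota U m" and j="iota U m"]) (use ip in auto)
    then show ?thesis by (simp add: sum_negf)
  qed
  have F0: "X U m - N = (\<lambda>p. ({}::'a set, p)) ` pr U m"
  proof (intro set_eqI iffI)
    fix x assume xin: "x \<in> X U m - N"
    obtain S s c where xe: "x = (S, s, c)" by (cases x) auto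
    have xX: "(S, s, c) \<in> X U m" and nt: "\<And>v. \<not> tog U m S s c v"
      using xin by (auto simp: N_def xe togx_def)
    have S0: "S = {}" using nt by (auto simp: tog_def)
    have sa: "s \<in> acyclic_headings (EU U) edge" and cc: "c \<in> colorings U (Suc m)"
      and cp: "compatible (EU U) edge c s"
      using xX S0 by (auto simp: X_iff)
    have sP: "s \<in> Pi\<^sub>E (EU U) edge" and noc: "\<And>l fc. \<not> oriented_cycle (EU U) edge s l fc"
      using sa by (auto simp: acyc_iff)
    have cP: "c \<in> U \<rightarrow>\<^sub>E {1..Suc m}" using cc by (simp add: colorings_def)
    have noSuc: "c v \<noteq> Suc m" if v: "v \<in> U" for v
    proof
      assume cv: "c v = Suc m"
      define W where "W = {v\<in>U. c v = Suc m}"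
      have finW: "finite W" using finU by (simp add: W_def)
      have neW: "W \<noteq> {}" using v cv by (auto simp: W_def)
      have st: "\<forall>w\<in>W. \<exists>k\<in>EU U. w \<in> edge k \<and> s k \<noteq> w \<and> s k \<in> W"
      proof
        fix w assume w: "w \<in> W"
        then have wU: "w \<in> U" and cw: "c w = Suc m" by (auto simp: W_def)
        have "\<not> tog U m S s c w" by (rule nt)
        then obtain k where k: "k \<in> EU U" and wk: "w \<in> edge k" and sk: "s k \<noteq> w"
          using wU cw S0 by (auto simp: tog_def)
        have kE: "k \<in> Ed" and ku: "edge k \<subseteq> U" using k by (auto simp: EU_def)
        have skin: "s k \<in> edge k" using PiE_mem[OF sP k] .
        have "c (s k) = Max (c ` edge k)" using cp k by (simp add: compatible_def)
        moreover have "c w \<le> Max (c ` edge k)" using fin_edge[OF kE] wk by simp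
        moreover have "c (s k) \<in> {1..Suc m}" using PiE_mem[OF cP] skin ku by blast
        ultimately have "c (s k) = Suc m" using cw by simp
        then have "s k \<in> W" using skin ku by (auto simp: W_def)
        then show "\<exists>k\<in>EU U. w \<in> edge k \<and> s k \<noteq> w \<and> s k \<in> W" using k wk sk by blast
      qed
      show False using cycle_exists[OF finW neW st] noc by blast
    qed
    have "c \<in> colorings U m"
      unfolding colorings_def PiE_iff
    proof (intro conjI ballI)
      fix i assume i: "i \<in> U"
      then have "c i \<in> {1..Suc m}" using PiE_mem[OF cP] by blast
      then show "c i \<in> {1..m}" using noSuc[OF i] by (auto simp: le_Suc_eq)
    next
      show "c \<in> extensional U" using cP by (simp add: PiE_iff)
    qed
    then have "(s, c) \<in> pr U m" using sa cp by (simp add: pr_def compatible_pairs_def)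
    then show "x \<in> (\<lambda>p. ({}::'a set, p)) ` pr U m" using xe S0 by auto
  next
    fix x assume "x \<in> (\<lambda>p. ({}::'a set, p)) ` pr U m"
    then obtain s c where xe: "x = ({}, s, c)" and p: "(s, c) \<in> pr U m" by auto
    have sa: "s \<in> acyclic_headings (EU U) edge" and cc: "c \<in> colorings U m"
      and cp: "compatible (EU U) edge c s"
      using p by (auto simp: pr_def compatible_pairs_def)
    have cP: "c \<in> U \<rightarrow>\<^sub>E {1..m}" using cc by (simp add: colorings_def)
    have cc': "c \<in> colorings U (Suc m)"
      using cP unfolding colorings_def by (auto simp: PiE_iff)
    have "{} \<in> Ind U" by (simp add: Ind_def)
    then have xX: "x \<in> X U m" using sa cc' cp by (simp add: X_iff xe)
    have "\<not> tog U m {} s c v" for v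
    proof
      assume "tog U m {} s c v"
      then have "v \<in> U" "c v = Suc m" by (auto simp: tog_def)
      then show False using PiE_mem[OF cP] by force
    qed
    then show "x \<in> X U m - N" using xX by (simp add: N_def togx_def xe)
  qed
  have s3: "(\<Sum>x\<in>X U m - N. wt x) = real (g U m)"
  proof -
    have "(\<Sum>x\<in>X U m - N. wt x) = (\<Sum>p\<in>pr U m. wt ({}, p))"
      unfolding F0 by (subst sum.reindex) (auto simp: inj_on_def)
    also have "\<dots> = real (g U m)" by (simp add: wt_def g_def)
    finally show ?thesis .
  qed
  have "(\<Sum>x\<in>X U m. wt x) = (\<Sum>x\<in>X U m - N. wt x) + (\<Sum>x\<in>N. wt x)"
    by (rule sum.subset_diff[OF NX finX])
  then show ?thesis using s1 s2 s3 by simp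
qed

end



lemma poly_zero_nat:
  fixes Q :: "real poly"
  assumes "\<And>n. poly Q (real n) = 0"
  shows "Q = 0"
proof (rule ccontr)
  assume "Q \<noteq> 0"
  then have "finite {x. poly Q x = 0}" by (rule poly_roots_finite)
  moreover have "range real \<subseteq> {x. poly Q x = 0}" using assms by auto
  ultimately have "finite (range real)" using finite_subset by blast
  then show False using finite_imageD[of real UNIV] inj_of_nat by auto
qed

context hg
begin

lemma EU_empty: "EU {} = {}" using edge_ne by (auto simp: EU_def)

lemma f0: "f U 0 = (if U = {} then 1 else 0)"
proof (cases "U = {}")
  case True
  then show ?thesis by (simp add: f_def proper_colorings_def colorings_def proper_def EU_empty)
next
  case False
  then have "colorings U 0 = {}" by (auto simp: colorings_def PiE_eq_empty_iff)
  then show ?thesis using False by (simp add: f_def proper_colorings_def)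
qed

lemma g0: "g U 0 = (if U = {} then 1 else 0)"
proof (cases "U = {}")
  case True
  have "pr {} 0 = {(\<lambda>_. undefined, \<lambda>_. undefined)}"
    by (auto simp: pr_def compatible_pairs_def acyc_iff colorings_def compatible_def EU_empty
        oriented_cycle_def Suc_le_eq)
  then show ?thesis using True by (simp add: g_def)
next
  case False
  then have "colorings U 0 = {}" by (auto simp: colorings_def PiE_eq_empty_iff)
  then show ?thesis using False by (simp add: g_def pr_def compatible_pairs_def)
qed

lemma empty_Ind: "{} \<in> Ind U" by (simp add: Ind_def)

lemma f_poly: "U \<subseteq> I \<Longrightarrow> \<exists>P. \<forall>m. poly P (real m) = real (f U m)"
proof (induction "card U" arbitrary: U rule: less_induct)
  case less
  have U: "U \<subseteq> I" by fact
  have finU: "finite U" using U finI finite_subset by blast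
  have IH: "\<exists>P. \<forall>m. poly P (real m) = real (f (U - S) m)" if "S \<in> Ind U - {{}}" for S
  proof (rule less(1))
    have SU: "S \<subseteq> U" "S \<noteq> {}" using that by (auto simp: Ind_def)
    then show "card (U - S) < card U" using finU
      by (metis Diff_empty Diff_mono Diff_subset psubsetI psubset_card_mono subset_refl double_diff
          Diff_eq_empty_iff)
    show "U - S \<subseteq> I" using U by blast
  qed
  define P where "P = (\<Sum>S\<in>Ind U - {{}}. (SOME P. \<forall>m. poly P (real m) = real (f (U - S) m)))"
  have "poly P (real m) = (\<Sum>S\<in>Ind U - {{}}. real (f (U - S) m))" for m
    unfolding P_def poly_sum
  proof (rule sum.cong[OF refl])
    fix S assume "S \<in> Ind U - {{}}"
    from someI_ex[OF IH[OF this]] show "poly (SOME P. \<forall>m. poly P (real m) = real (f (U - S) m)) (real m) = real (f (U - S) m)"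
      by blast
  qed
  moreover have "real (f U (Suc m)) - real (f U m) = (\<Sum>S\<in>Ind U - {{}}. real (f (U - S) m))" for m
  proof -
    have "real (f U (Suc m)) = (\<Sum>S\<in>Ind U. real (f (U - S) m))" using f_Suc[OF U] by simp
    also have "\<dots> = real (f (U - {}) m) + (\<Sum>S\<in>Ind U - {{}}. real (f (U - S) m))"
      by (rule sum.remove[OF fin_Ind[OF U] empty_Ind])
    finally show ?thesis by simp
  qed
  ultimately show ?case using poly_of_diff[of "\<lambda>m. real (f U m)" P] by simp
qed

definition Fp where "Fp U = (SOME P. \<forall>m. poly P (real m) = real (f U m))"

lemma Fp_spec: "U \<subseteq> I \<Longrightarrow> poly (Fp U) (real m) = real (f U m)"
  using someI_ex[OF f_poly] unfolding Fp_def by blast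

lemma Fp_rec:
  assumes U: "U \<subseteq> I"
  shows "poly (Fp U) (x + 1) = (\<Sum>S\<in>Ind U. poly (Fp (U - S)) x)"
proof -
  define Q where "Q = pcompose (Fp U) [:1, 1:] - (\<Sum>S\<in>Ind U. Fp (U - S))"
  have "poly Q (real n) = 0" for n
  proof -
    have "poly Q (real n) = poly (Fp U) (real (Suc n)) - (\<Sum>S\<in>Ind U. poly (Fp (U - S)) (real n))"
      by (simp add: Q_def poly_pcompose poly_sum add.commute)
    also have "\<dots> = real (f U (Suc n)) - (\<Sum>S\<in>Ind U. real (f (U - S) n))"
    proof -
      have h1: "poly (Fp U) (real (Suc n)) = real (f U (Suc n))" by (rule Fp_spec[OF U])
      have h2: "(\<Sum>S\<in>Ind U. poly (Fp (U-S)) (real n)) = (\<Sum>S\<in>Ind U. real (f (U-S) n))"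
        by (rule sum.cong[OF refl]) (use U in \<open>auto intro: Fp_spec\<close>)
      show ?thesis by (simp only: h1 h2)
    qed
    also have "\<dots> = 0" using f_Suc[OF U] by simp
    finally show ?thesis .
  qed
  then have "Q = 0" by (rule poly_zero_nat)
  then have "poly Q x = 0" by simp
  then show ?thesis by (simp add: Q_def poly_pcompose poly_sum add.commute)
qed

lemma G_eq: "U \<subseteq> I \<Longrightarrow> (-1) ^ card U * poly (Fp U) (- real m) = real (g U m)"
proof (induction "card U" arbitrary: U m rule: less_induct)
  case less
  have U: "U \<subseteq> I" by fact
  have finU: "finite U" using U finI finite_subset by blast
  have IHU: "(-1) ^ card (U - S) * poly (Fp (U - S)) (- real m') = real (g (U - S) m')"
    if "S \<in> Ind U - {{}}" for S m'
  proof (rule less(1))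
    have SU: "S \<subseteq> U" "S \<noteq> {}" using that by (auto simp: Ind_def)
    then show "card (U - S) < card U" using finU
      by (metis Diff_empty Diff_mono Diff_subset psubsetI psubset_card_mono subset_refl double_diff
          Diff_eq_empty_iff)
    show "U - S \<subseteq> I" using U by blast
  qed
  have sgn: "(-1::real) ^ card U = (-1) ^ card S * (-1) ^ card (U - S)" if "S \<in> Ind U" for S
  proof -
    have SU: "S \<subseteq> U" using that by (auto simp: Ind_def)
    then have "card U = card S + card (U - S)" using finU
      by (metis card_Diff_subset card_mono finite_subset le_add_diff_inverse)
    then show ?thesis by (simp add: power_add)
  qed
  show ?case
  proof (induction m)
    case 0
    show ?case using Fp_spec[OF U, of 0] f0[of U] g0[of U] by simp
  next
    case (Suc m)
    define T where "T = (\<Sum>S\<in>Ind U - {{}}. (-1) ^ card S * real (g (U - S) (Suc m)))"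
    have "poly (Fp U) (- real m) = (\<Sum>S\<in>Ind U. poly (Fp (U - S)) (- real (Suc m)))"
      using Fp_rec[OF U, of "- real (Suc m)"] by simp
    also have "\<dots> = poly (Fp (U - {})) (- real (Suc m)) + (\<Sum>S\<in>Ind U - {{}}. poly (Fp (U - S)) (- real (Suc m)))"
      by (rule sum.remove[OF fin_Ind[OF U] empty_Ind])
    also have "\<dots> = poly (Fp U) (- real (Suc m)) + (\<Sum>S\<in>Ind U - {{}}. poly (Fp (U - S)) (- real (Suc m)))"
      by simp
    finally have e1: "poly (Fp U) (- real m) = poly (Fp U) (- real (Suc m)) + (\<Sum>S\<in>Ind U - {{}}. poly (Fp (U - S)) (- real (Suc m)))" .
    have e2: "(-1) ^ card U * (\<Sum>S\<in>Ind U - {{}}. poly (Fp (U - S)) (- real (Suc m))) = T"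
      unfolding T_def sum_distrib_left
    proof (rule sum.cong[OF refl])
      fix S assume S: "S \<in> Ind U - {{}}"
      have "(-1::real) ^ card U * poly (Fp (U - S)) (- real (Suc m))
          = (-1) ^ card S * ((-1) ^ card (U - S) * poly (Fp (U - S)) (- real (Suc m)))"
        using sgn S by simp
      also have "\<dots> = (-1) ^ card S * real (g (U - S) (Suc m))"
        using IHU[OF S, of "Suc m"] by simp
      finally show "(-1) ^ card U * poly (Fp (U - S)) (- real (Suc m)) = (-1) ^ card S * real (g (U - S) (Suc m))" .
    qed
    have e3: "real (g U m) = real (g U (Suc m)) + T"
    proof -
      have "real (g U m) = (\<Sum>S\<in>Ind U. (-1) ^ card S * real (g (U-S) (Suc m)))" by (rule g_rec[OF U])
      also have "\<dots> = (-1) ^ card ({}::'a set) * real (g (U-{}) (Suc m)) + T"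
        unfolding T_def by (rule sum.remove[OF fin_Ind[OF U] empty_Ind])
      also have "\<dots> = real (g U (Suc m)) + T" by simp
      finally show ?thesis .
    qed
    have "(-1) ^ card U * poly (Fp U) (- real m) = (-1) ^ card U * poly (Fp U) (- real (Suc m)) + T"
      using e1 e2 by (simp add: distrib_left)
    then show ?case using Suc e3 by simp
  qed
qed

lemma EU_I: "EU I = Ed" using edge_sub by (auto simp: EU_def)

lemma card_cp1: "card (compatible_pairs I Ed edge 1) = card (acyclic_headings Ed edge)"
proof -
  define c1 where "c1 = restrict (\<lambda>_. 1::nat) I"
  have col: "colorings I 1 = {c1}"
    by (auto simp: colorings_def c1_def PiE_iff extensional_def fun_eq_iff)
  have "compatible_pairs I Ed edge 1 = acyclic_headings Ed edge \<times> {c1}"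
  proof (intro set_eqI iffI)
    fix p assume "p \<in> compatible_pairs I Ed edge 1"
    then show "p \<in> acyclic_headings Ed edge \<times> {c1}" using col by (auto simp: compatible_pairs_def)
  next
    fix p assume p: "p \<in> acyclic_headings Ed edge \<times> {c1}"
    then obtain s where pe: "p = (s, c1)" and sa: "s \<in> acyclic_headings Ed edge" by auto
    have sP: "s \<in> Pi\<^sub>E Ed edge" using sa by (simp add: acyc_iff)
    have "compatible Ed edge c1 s"
      unfolding compatible_def
    proof
      fix k assume k: "k \<in> Ed"
      have "c1 ` edge k = {1}" using edge_sub[OF k] edge_ne[OF k] by (auto simp: c1_def)
      moreover have "c1 (s k) = 1" using PiE_mem[OF sP k] edge_sub[OF k] by (auto simp: c1_def)
      ultimately show "c1 (s k) = Max (c1 ` edge k)" by simp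
    qed
    then show "p \<in> compatible_pairs I Ed edge 1" using pe sa col by (simp add: compatible_pairs_def)
  qed
  then show ?thesis by (simp add: card_cartesian_product)
qed

end

theorem mainTheorem10:
  fixes I :: "'a set" and Ed :: "'e set" and edge :: "'e \<Rightarrow> 'a set"
  assumes "hypergraph I Ed edge"
  shows "(\<exists>P :: real poly. \<forall>m::nat. m > 0 \<longrightarrow>
             poly P (real m) = real (card (proper_colorings I Ed edge m)))
       \<and> (\<forall>P :: real poly.
             (\<forall>m::nat. m > 0 \<longrightarrow> poly P (real m) = real (card (proper_colorings I Ed edge m)))
           \<longrightarrow> (\<forall>m::nat. m > 0 \<longrightarrow>
                  (-1) ^ card I * poly P (- real m) = real (card (compatible_pairs I Ed edge m)))
             \<and> real (card (acyclic_headings Ed edge)) = (-1) ^ card I * poly P (-1))"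
proof -
  interpret hg I Ed edge using assms by unfold_locales
  have fI: "f I m = card (proper_colorings I Ed edge m)" for m by (simp add: f_def EU_I)
  have gI: "g I m = card (compatible_pairs I Ed edge m)" for m by (simp add: g_def pr_def EU_I)
  have ex: "\<forall>m::nat. m > 0 \<longrightarrow> poly (Fp I) (real m) = real (card (proper_colorings I Ed edge m))"
    using Fp_spec[of I] fI by simp
  have rest: "(\<forall>m::nat. m > 0 \<longrightarrow>
                  (-1) ^ card I * poly P (- real m) = real (card (compatible_pairs I Ed edge m)))
             \<and> real (card (acyclic_headings Ed edge)) = (-1) ^ card I * poly P (-1)"
    if P: "\<forall>m::nat. m > 0 \<longrightarrow> poly P (real m) = real (card (proper_colorings I Ed edge m))" for P
  proof -
    define Q where "Q = pcompose (P - Fp I) [:1, 1:]"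
    have "poly Q (real n) = 0" for n
    proof -
      have "poly P (real (Suc n)) = poly (Fp I) (real (Suc n))"
        using P[rule_format, of "Suc n"] Fp_spec[of I "Suc n"] fI by simp
      then show ?thesis by (simp add: Q_def poly_pcompose add.commute)
    qed
    then have Q0: "Q = 0" by (rule poly_zero_nat)
    have PF: "poly P x = poly (Fp I) x" for x
    proof -
      have "poly Q (x - 1) = 0" using Q0 by simp
      then show ?thesis by (simp add: Q_def poly_pcompose)
    qed
    have A: "(-1) ^ card I * poly P (- real m) = real (card (compatible_pairs I Ed edge m))" for m
      using G_eq[of I m] PF gI by simp
    have B: "real (card (acyclic_headings Ed edge)) = (-1) ^ card I * poly P (-1)"
      using A[of 1] card_cp1 by simp
    show ?thesis using A B by blast
  qed
  show ?thesis using ex rest by blast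
qed



end
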